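(* Consider $n$ flows sharing a server that performs interleaved weighted round robin (IWRR) with positive integer weights $w_1,\dots,w_n$, and fix a flow of interest $f_i$. Then for every backlogged period $(s,t]$ of $f_i$ and every $j\neq i$, \[ \frac{D_i(s,t)}{w_i l_i^{\min}} \;\geq\; \frac{\big[D_j(s,t)-w_j l_j^{\max}\big]^+}{w_j l_j^{\max}}, \] i.e. IWRR is a bandwidth-sharing policy for $f_i$ with the same weights $\phi_i'=w_i l_i^{\min}$, $\phi_j'=w_j l_j^{\max}$ ($j\ne i$) and penalty terms $H_{ij}'=w_j l_j^{\max}\mathbb{1}_{\{i\neq j\}}$ as for WRR.
   Context: Each flow $f_k$ sends packets with sizes in $[l_k^{\min},l_k^{\max}]$, $0<l_k^{\min}\le l_k^{\max}$, queued FIFO in a per-flow queue. IWRR: let $w_{\max}=\max_k w_k$. The server runs rounds forever; each round consists of cycles $c=1,\dots,w_{\max}$; in cycle $c$ the server visits flows $k=1,\dots,n$ in order and, if queue $k$ is nonempty and $c\le w_k$, transmits (non-preemptively) exactly one packet from the head of queue $k$. $D_k(t)$ is the cumulative data of flow $k$ that has left the server in $[0,t)$, $A_k(t)$ the cumulative arrivals, $D_k\le A_k$, $D_k(s,t):=D_k(t)-D_k(s)$. An interval $(s,t]$ is a backlogged period of $f_i$ if $D_i(\tau)<A_i(\tau)$ for all $\tau\in(s,t]$. $[x]^+:=\max\{x,0\}$. A server has a bandwidth-sharing policy if there exist weights $\phi_k>0$ and numbers $H_{ij}\ge0$ such that for every backlogged period $(s,t]$ of $f_i$ and all $j\neq i$: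 $D_i(s,t)/\phi_i\ge[D_j(s,t)-H_{ij}]^+/\phi_j$. *)

theory Defs
  imports Complex_Main
begin

text \<open>Flows are indexed 0..<n (the paper's 1..n); server visits them in this order.
  Packet p (p = 0,1,2,...) of flow k has arrival time arr k p and length len k p.\<close>

definition iwrr_round :: "nat \<Rightarrow> (nat \<Rightarrow> nat) \<Rightarrow> nat list" where
  "iwrr_round n w =
     concat (map (\<lambda>c. filter (\<lambda>k. c \<le> w k) [0..<n]) [1..<Suc (Max (w ` {..<n}))])"

definition slot_flow :: "nat \<Rightarrow> (nat \<Rightarrow> nat) \<Rightarrow> nat \<Rightarrow> nat" where
  "slot_flow n w m = iwrr_round n w ! (m mod length (iwrr_round n w))"

definition served :: "nat \<Rightarrow> (nat \<Rightarrow> nat) \<Rightarrow> (nat \<Rightarrow> bool) \<Rightarrow> nat \<Rightarrow> nat \<Rightarrow> nat" where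
  "served n w busy k m = card {m'. m' < m \<and> slot_flow n w m' = k \<and> busy m'}"

text \<open>An execution of the IWRR server: slot m is visited at time v m; busy m holds iff the
  queue of the visited flow is nonempty at the visit (some arrived packet not yet transmitted);
  in that case the head packet is transmitted non-preemptively during [v m, fin m) and the
  next visit happens no earlier than fin m.\<close>
definition iwrr_exec ::
  "nat \<Rightarrow> (nat \<Rightarrow> nat) \<Rightarrow> (nat \<Rightarrow> nat \<Rightarrow> real) \<Rightarrow> (nat \<Rightarrow> real) \<Rightarrow> (nat \<Rightarrow> bool)
     \<Rightarrow> (nat \<Rightarrow> real) \<Rightarrow> bool" where
  "iwrr_exec n w arr v busy fin \<longleftrightarrow>
     (\<forall>m. v m \<le> v (Suc m)) \<and>
     (\<forall>m. busy m \<longleftrightarrow>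
          served n w busy (slot_flow n w m) m < card {p. arr (slot_flow n w m) p \<le> v m}) \<and>
     (\<forall>m. busy m \<longrightarrow> v m < fin m \<and> fin m \<le> v (Suc m))"

definition cum_arr :: "(nat \<Rightarrow> nat \<Rightarrow> real) \<Rightarrow> (nat \<Rightarrow> nat \<Rightarrow> real) \<Rightarrow> nat \<Rightarrow> real \<Rightarrow> real" where
  "cum_arr arr len k t = (\<Sum>p\<in>{p. arr k p < t}. len k p)"

text \<open>Cumulative departures D_k(t): data of flow k whose transmission has completed before t.
  The packet transmitted in a busy slot m of flow k is the (served ... k m)-th packet (FIFO).\<close>
definition cum_dep ::
  "nat \<Rightarrow> (nat \<Rightarrow> nat) \<Rightarrow> (nat \<Rightarrow> bool) \<Rightarrow> (nat \<Rightarrow> real) \<Rightarrow> (nat \<Rightarrow> nat \<Rightarrow> real)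
     \<Rightarrow> nat \<Rightarrow> real \<Rightarrow> real" where
  "cum_dep n w busy fin len k t =
     (\<Sum>m\<in>{m. busy m \<and> slot_flow n w m = k \<and> fin m < t}. len k (served n w busy k m))"

definition pos_part :: "real \<Rightarrow> real" where
  "pos_part x = max x 0"

end

theory Submission imports Defs begin

lemma count_round:
  assumes "k < n" "\<forall>k<n. 0 < w k"
  shows "length (filter ((=) k) (iwrr_round n w)) = w k"
proof -
  define M where "M = Max (w ` {..<n})"
  have wk: "w k \<le> M" unfolding M_def using assms by auto
  have inner: "length (filter ((=) k) (filter (\<lambda>x. c \<le> w x) [0..<n])) = (if c \<le> w k then 1 else 0)" for c
  proof -
    have "length (filter (\<lambda>x. c \<le> w x \<and> k = x) [0..<n]) = card ({x. c \<le> w x \<and> k = x} \<inter> set [0..<n])"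
      by (rule distinct_length_filter) simp
    also have "{x. c \<le> w x \<and> k = x} \<inter> set [0..<n] = (if c \<le> w k then {k} else {})"
      using assms by auto
    finally show ?thesis by (simp add: filter_filter)
  qed
  have "length (filter ((=) k) (iwrr_round n w)) =
     (\<Sum>c\<leftarrow>[1..<Suc M]. length (filter ((=) k) (filter (\<lambda>x. c \<le> w x) [0..<n])))"
    unfolding iwrr_round_def M_def by (simp add: filter_concat length_concat comp_def)
  also have "\<dots> = (\<Sum>c\<leftarrow>[1..<Suc M]. (if c \<le> w k then 1 else 0))"
    by (simp only: inner)
  also have "\<dots> = (\<Sum>c\<in>{1..<Suc M}. (if c \<le> w k then 1 else 0))"
    by (simp add: sum_set_upt_conv_sum_list_nat[symmetric])
  also have "\<dots> = (\<Sum>c\<in>{1..<Suc M} \<inter> {c. c \<le> w k}. 1)"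
    by (subst sum.inter_restrict) auto
  also have "{1..<Suc M} \<inter> {c. c \<le> w k} = {1..w k}" using wk by auto
  finally show ?thesis by simp
qed

lemma round_len_pos:
  assumes "k < n" "\<forall>k<n. 0 < w k"
  shows "0 < length (iwrr_round n w)"
proof -
  have "length (filter ((=) k) (iwrr_round n w)) > 0" using count_round[OF assms] assms by auto
  then show ?thesis by (metis length_filter_le less_le_trans)
qed

lemma count_period:
  assumes "k < n" "\<forall>k<n. 0 < w k"
  shows "card {m. p \<le> m \<and> m < p + length (iwrr_round n w) \<and> slot_flow n w m = k} = w k"
proof -
  define L where "L = length (iwrr_round n w)"
  define R where "R = iwrr_round n w"
  have L: "0 < L" using round_len_pos[OF assms] L_def by simp
  have "bij_betw (\<lambda>m. m mod L) {m. p \<le> m \<and> m < p + L \<and> slot_flow n w m = k} {r. r < L \<and> R ! r = k}"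
  proof (rule bij_betw_imageI)
    show "inj_on (\<lambda>m. m mod L) {m. p \<le> m \<and> m < p + L \<and> slot_flow n w m = k}"
    proof (rule inj_onI)
      fix x y assume x: "x \<in> {m. p \<le> m \<and> m < p + L \<and> slot_flow n w m = k}"
        and y: "y \<in> {m. p \<le> m \<and> m < p + L \<and> slot_flow n w m = k}" and e: "x mod L = y mod L"
      show "x = y"
      proof (rule ccontr)
        assume "x \<noteq> y"
        then consider "x < y" | "y < x" by linarith
        then show False
        proof cases
          case 1
          then have "L dvd (y - x)" using e mod_eq_dvd_iff_nat[of x y L] by simp
          then show False using 1 x y by (auto dest!: dvd_imp_le)
        next
          case 2
          then have "L dvd (x - y)" using e mod_eq_dvd_iff_nat[of y x L] by simp
          then show False using 2 x y by (auto dest!: dvd_imp_le)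
        qed
      qed
    qed
    show "(\<lambda>m. m mod L) ` {m. p \<le> m \<and> m < p + L \<and> slot_flow n w m = k} = {r. r < L \<and> R ! r = k}"
    proof
      show "(\<lambda>m. m mod L) ` {m. p \<le> m \<and> m < p + L \<and> slot_flow n w m = k} \<subseteq> {r. r < L \<and> R ! r = k}"
        using L by (auto simp: slot_flow_def L_def R_def)
      show "{r. r < L \<and> R ! r = k} \<subseteq> (\<lambda>m. m mod L) ` {m. p \<le> m \<and> m < p + L \<and> slot_flow n w m = k}"
      proof
        fix r assume r: "r \<in> {r. r < L \<and> R ! r = k}"
        define q where "q = p div L"
        define rr where "rr = p mod L"
        have pq: "p = L * q + rr" "rr < L" unfolding q_def rr_def using L by simp_all
        define m where "m = (if rr \<le> r then L * q + r else L * q + L + r)"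
        have e0: "L * q + L + r = r + L * Suc q" by simp
        have e1: "(L * q + L + r) mod L = r" using r by (simp only: e0 mod_mult_self2) simp
        have mm: "m mod L = r" using r e1 unfolding m_def by (auto simp del: mult_Suc_right)
        have rL: "r < L" using r by simp
        have "p \<le> m \<and> m < p + L"
        proof (cases "rr \<le> r")
          case True then have "m = L * q + r" unfolding m_def by simp
          then show ?thesis using True rL pq by linarith
        next
          case False then have "m = L * q + L + r" unfolding m_def by simp
          then show ?thesis using False rL pq by linarith
        qed
        then show "r \<in> (\<lambda>m. m mod L) ` {m. p \<le> m \<and> m < p + L \<and> slot_flow n w m = k}"
          using mm r by (auto simp: slot_flow_def L_def R_def intro!: image_eqI[of _ _ m])
      qed
    qed
  qed
  then have "card {m. p \<le> m \<and> m < p + L \<and> slot_flow n w m = k} = card {r. r < L \<and> R ! r = k}"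
    by (rule bij_betw_same_card)
  also have "\<dots> = length (filter ((=) k) R)"
    unfolding L_def R_def length_filter_conv_card by (simp add: eq_commute)
  finally show ?thesis using count_round[OF assms] L_def R_def by simp
qed


lemma count_periods:
  assumes "k < n" "\<forall>k<n. 0 < w k"
  shows "card {m. p \<le> m \<and> m < p + q * length (iwrr_round n w) \<and> slot_flow n w m = k} = q * w k"
proof (induction q)
  case 0 then show ?case by simp
next
  case (Suc q)
  define L where "L = length (iwrr_round n w)"
  have "{m. p \<le> m \<and> m < p + Suc q * L \<and> slot_flow n w m = k} =
        {m. p \<le> m \<and> m < p + q * L \<and> slot_flow n w m = k} \<union>
        {m. p + q * L \<le> m \<and> m < p + q * L + L \<and> slot_flow n w m = k}" by auto
  moreover have "card \<dots> = card {m. p \<le> m \<and> m < p + q * L \<and> slot_flow n w m = k} +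
        card {m. p + q * L \<le> m \<and> m < p + q * L + L \<and> slot_flow n w m = k}"
    by (rule card_Un_disjoint) (auto intro: finite_subset[of _ "{..<p + q*L + L}"])
  ultimately show ?case using Suc count_period[OF assms, of "p + q * L"] L_def by simp
qed

lemma exec_mono: "iwrr_exec n w arr v busy fin \<Longrightarrow> m \<le> m' \<Longrightarrow> v m \<le> v m'"
  unfolding iwrr_exec_def by (metis lift_Suc_mono_le)

lemma exec_busy: "iwrr_exec n w arr v busy fin \<Longrightarrow>
   busy m \<longleftrightarrow> served n w busy (slot_flow n w m) m < card {p. arr (slot_flow n w m) p \<le> v m}"
  unfolding iwrr_exec_def by blast

lemma exec_fin: "iwrr_exec n w arr v busy fin \<Longrightarrow> busy m \<Longrightarrow> v m < fin m \<and> fin m \<le> v (Suc m)"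
  unfolding iwrr_exec_def by blast

lemma served_strict:
  assumes "m1 < m2" "busy m1" "slot_flow n w m1 = k"
  shows "served n w busy k m1 < served n w busy k m2"
  unfolding served_def
proof (rule psubset_card_mono)
  show "finite {m'. m' < m2 \<and> slot_flow n w m' = k \<and> busy m'}" by simp
  show "{m'. m' < m1 \<and> slot_flow n w m' = k \<and> busy m'} \<subset> {m'. m' < m2 \<and> slot_flow n w m' = k \<and> busy m'}"
    using assms by auto
qed

lemma served_inj: "inj_on (served n w busy k) {m. busy m \<and> slot_flow n w m = k}"
proof (rule inj_onI)
  fix x y assume x: "x \<in> {m. busy m \<and> slot_flow n w m = k}" and y: "y \<in> {m. busy m \<and> slot_flow n w m = k}"
    and e: "served n w busy k x = served n w busy k y"
  show "x = y"
  proof (rule ccontr)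
    assume "x \<noteq> y"
    then consider "x < y" | "y < x" by linarith
    then show False using served_strict[of x y busy n w k] served_strict[of y x busy n w k] x y e
      by cases auto
  qed
qed

lemma finite_dep:
  assumes exec: "iwrr_exec n w arr v busy fin" and fin: "finite {p. arr k p < t}"
  shows "finite {m. busy m \<and> slot_flow n w m = k \<and> fin m < t}"
proof -
  let ?D = "{m. busy m \<and> slot_flow n w m = k \<and> fin m < t}"
  have inj: "inj_on (served n w busy k) ?D"
    using served_inj by (rule inj_on_subset) auto
  have "served n w busy k ` ?D \<subseteq> {..<card {p. arr k p < t}}"
  proof
    fix x assume "x \<in> served n w busy k ` ?D"
    then obtain m where m: "m \<in> ?D" "x = served n w busy k m" by auto
    have "v m < t" using exec_fin[OF exec, of m] m by auto
    then have "{p. arr k p \<le> v m} \<subseteq> {p. arr k p < t}" by auto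
    then have "card {p. arr k p \<le> v m} \<le> card {p. arr k p < t}" using fin by (rule card_mono[rotated])
    moreover have "served n w busy k m < card {p. arr k p \<le> v m}"
      using exec_busy[OF exec, of m] m by auto
    ultimately show "x \<in> {..<card {p. arr k p < t}}" using m by auto
  qed
  then have "finite (served n w busy k ` ?D)" by (rule finite_subset) simp
  then show ?thesis using inj by (rule finite_imageD)
qed

lemma down_closed_nat:
  assumes "finite (X::nat set)" "\<And>x y. y \<in> X \<Longrightarrow> x \<le> y \<Longrightarrow> x \<in> X"
  shows "X = {..<card X}"
proof -
  have "\<exists>x. x \<notin> X" using assms(1) by (metis ex_new_if_finite infinite_UNIV_nat)
  define N where "N = (LEAST x. x \<notin> X)"
  have N: "N \<notin> X" unfolding N_def using \<open>\<exists>x. x \<notin> X\<close> by (rule LeastI_ex)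
  have "X = {..<N}"
  proof
    show "X \<subseteq> {..<N}"
    proof
      fix x assume "x \<in> X"
      show "x \<in> {..<N}"
      proof (rule ccontr)
        assume "x \<notin> {..<N}"
        then have "N \<le> x" by simp
        then show False using assms(2)[OF \<open>x \<in> X\<close>] N by blast
      qed
    qed
    show "{..<N} \<subseteq> X" using not_less_Least N_def by auto
  qed
  then show ?thesis by simp
qed


lemma idle_contra:
  assumes exec: "iwrr_exec n w arr v busy fin"
   and lenpos: "\<forall>p. 0 \<le> len i p"
   and mono: "mono (arr i)"
   and finarr: "\<forall>\<tau>. finite {p. arr i p < \<tau>}"
   and backlogged: "\<forall>\<tau>. s < \<tau> \<and> \<tau> \<le> t \<longrightarrow>
                       cum_dep n w busy fin len i \<tau> < cum_arr arr len i \<tau>"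
   and sm: "slot_flow n w m = i" "s \<le> v m" "v m < t"
  shows "busy m"
proof (rule ccontr)
  assume nb: "\<not> busy m"
  define K where "K = card {p. arr i p \<le> v m}"
  have KS: "K \<le> served n w busy i m" using exec_busy[OF exec, of m] nb sm unfolding K_def by simp
  define F where "F = {p. arr i p < t}"
  define S where "S = arr i ` F \<inter> {x. v m < x}"
  have finS: "finite S" unfolding S_def F_def using finarr by simp
  define \<tau> where "\<tau> = (if S = {} then t else Min S)"
  have tau: "v m < \<tau> \<and> \<tau> \<le> t"
  proof (cases "S = {}")
    case True then show ?thesis using sm unfolding \<tau>_def by simp
  next
    case False
    then have "Min S \<in> S" using finS by simp
    then show ?thesis unfolding \<tau>_def S_def F_def using False by auto
  qed
  have arrset: "{p. arr i p < \<tau>} = {p. arr i p \<le> v m}"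
  proof
    show "{p. arr i p \<le> v m} \<subseteq> {p. arr i p < \<tau>}" using tau by auto
    show "{p. arr i p < \<tau>} \<subseteq> {p. arr i p \<le> v m}"
    proof
      fix p assume p: "p \<in> {p. arr i p < \<tau>}"
      show "p \<in> {p. arr i p \<le> v m}"
      proof (rule ccontr)
        assume "p \<notin> {p. arr i p \<le> v m}"
        then have "arr i p \<in> S" using p tau unfolding S_def F_def by auto
        then have "S \<noteq> {}" "Min S \<le> arr i p" using finS by auto
        then show False using p unfolding \<tau>_def by auto
      qed
    qed
  qed
  have finK: "finite {p. arr i p \<le> v m}" using finarr arrset by metis
  have down: "{p. arr i p \<le> v m} = {..<K}" unfolding K_def
  proof (rule down_closed_nat[OF finK])
    fix x y assume "y \<in> {p. arr i p \<le> v m}" "x \<le> y"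
    then show "x \<in> {p. arr i p \<le> v m}" using mono by (auto dest: monoD)
  qed
  have A: "cum_arr arr len i \<tau> = (\<Sum>p<K. len i p)"
    unfolding cum_arr_def arrset down ..
  define B where "B = {m'. m' < m \<and> slot_flow n w m' = i \<and> busy m'}"
  have cB: "card B = served n w busy i m" unfolding B_def served_def ..
  have finB: "finite B" unfolding B_def by simp
  have injB: "inj_on (served n w busy i) B"
    using served_inj by (rule inj_on_subset) (auto simp: B_def)
  have imgB: "served n w busy i ` B = {..<card B}"
  proof (rule card_subset_eq)
    show "finite {..<card B}" by simp
    show "served n w busy i ` B \<subseteq> {..<card B}"
      using served_strict[of _ m busy n w i] cB by (auto simp: B_def)
    show "card (served n w busy i ` B) = card {..<card B}"
      using card_image[OF injB] by simp
  qed
  have "(\<Sum>p<K. len i p) \<le> (\<Sum>p<card B. len i p)"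
    using KS cB lenpos by (intro sum_mono2) auto
  also have "\<dots> = (\<Sum>m'\<in>B. len i (served n w busy i m'))"
    using sum.reindex[OF injB, of "len i"] imgB by simp
  also have "\<dots> \<le> (\<Sum>m'\<in>{m. busy m \<and> slot_flow n w m = i \<and> fin m < \<tau>}. len i (served n w busy i m'))"
  proof (rule sum_mono2)
    show "finite {m. busy m \<and> slot_flow n w m = i \<and> fin m < \<tau>}"
      using finite_dep[OF exec] finarr by blast
    show "B \<subseteq> {m. busy m \<and> slot_flow n w m = i \<and> fin m < \<tau>}"
    proof
      fix x assume x: "x \<in> B"
      then have "fin x \<le> v (Suc x)" using exec_fin[OF exec, of x] by (auto simp: B_def)
      also have "v (Suc x) \<le> v m" using x exec_mono[OF exec, of "Suc x" m] by (auto simp: B_def)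
      finally show "x \<in> {m. busy m \<and> slot_flow n w m = i \<and> fin m < \<tau>}"
        using x tau by (auto simp: B_def)
    qed
    show "0 \<le> len i (served n w busy i b)" for b using lenpos by simp
  qed
  also have "\<dots> = cum_dep n w busy fin len i \<tau>" unfolding cum_dep_def ..
  finally have "cum_arr arr len i \<tau> \<le> cum_dep n w busy fin len i \<tau>" using A by simp
  moreover have "s < \<tau>" using sm tau by linarith
  ultimately show False using backlogged tau by force
qed


lemma key_count:
  assumes exec: "iwrr_exec n w arr v busy fin"
    and w_pos: "\<forall>k<n. 0 < w k"
    and ij: "i < n" "j < n" "j \<noteq> i"
    and busyI: "\<forall>m. slot_flow n w m = i \<and> s \<le> v m \<and> v m < t \<longrightarrow> busy m"
    and finJ: "finite {m. busy m \<and> slot_flow n w m = j \<and> s \<le> fin m \<and> fin m < t}"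
    and finI: "finite {m. busy m \<and> slot_flow n w m = i \<and> s \<le> fin m \<and> fin m < t}"
  shows "w i * card {m. busy m \<and> slot_flow n w m = j \<and> s \<le> fin m \<and> fin m < t}
         \<le> w i * w j + w j * card {m. busy m \<and> slot_flow n w m = i \<and> s \<le> fin m \<and> fin m < t}"
proof -
  define J where "J = {m. busy m \<and> slot_flow n w m = j \<and> s \<le> fin m \<and> fin m < t}"
  define I where "I = {m. busy m \<and> slot_flow n w m = i \<and> s \<le> fin m \<and> fin m < t}"
  show ?thesis
  proof (cases "J = {}")
    case True then show ?thesis unfolding J_def[symmetric] by simp
  next
    case False
    have fJ: "finite J" using finJ J_def by simp
    define a where "a = Min J"
    define b where "b = Max J"
    have aJ: "a \<in> J" unfolding a_def using fJ False by simp
    have bJ: "b \<in> J" unfolding b_def using fJ False by simp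
    have Jab: "\<And>m. m \<in> J \<Longrightarrow> a \<le> m \<and> m \<le> b" unfolding a_def b_def using fJ by simp
    define L where "L = length (iwrr_round n w)"
    have L: "0 < L" unfolding L_def using round_len_pos[OF ij(1) w_pos] .
    define q where "q = (b - a) div L"
    have ab: "a \<le> b" using Jab aJ by blast
    have dm: "b - a = q * L + (b - a) mod L" unfolding q_def by simp
    have "(b - a) mod L < L" using L by simp
    then have b1: "b < a + Suc q * L" using dm ab by simp
    have b2: "a + q * L \<le> b" using dm ab by linarith
    have "card J \<le> card {m. a \<le> m \<and> m < a + Suc q * L \<and> slot_flow n w m = j}"
    proof (rule card_mono)
      show "J \<subseteq> {m. a \<le> m \<and> m < a + Suc q * L \<and> slot_flow n w m = j}"
      proof
        fix m assume "m \<in> J"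
        then have "a \<le> m" "m \<le> b" "slot_flow n w m = j" using Jab by (auto simp: J_def)
        then show "m \<in> {m. a \<le> m \<and> m < a + Suc q * L \<and> slot_flow n w m = j}" using b1 by simp
      qed
    qed simp
    also have "\<dots> = Suc q * w j" unfolding L_def by (rule count_periods[OF ij(2) w_pos])
    finally have cJ: "card J \<le> Suc q * w j" .
    have "q * w i = card {m. a \<le> m \<and> m < a + q * L \<and> slot_flow n w m = i}"
      unfolding L_def by (rule count_periods[OF ij(1) w_pos, symmetric])
    also have "\<dots> \<le> card I"
    proof (rule card_mono)
      show "finite I" using finI I_def by simp
      show "{m. a \<le> m \<and> m < a + q * L \<and> slot_flow n w m = i} \<subseteq> I"
      proof
        fix m assume m: "m \<in> {m. a \<le> m \<and> m < a + q * L \<and> slot_flow n w m = i}"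
        have "m \<noteq> a" using m aJ ij(3) by (auto simp: J_def)
        then have am: "a < m" "m < b" using m b2 by auto
        have "s \<le> fin a" using aJ by (simp add: J_def)
        also have "fin a \<le> v (Suc a)" using exec_fin[OF exec, of a] aJ by (simp add: J_def)
        also have "v (Suc a) \<le> v m" using exec_mono[OF exec] am by simp
        finally have sv: "s \<le> v m" .
        have "v (Suc m) \<le> v b" using exec_mono[OF exec] am by simp
        moreover have "v b < fin b" "fin b < t" using exec_fin[OF exec, of b] bJ by (auto simp: J_def)
        ultimately have vt: "v (Suc m) < t" by linarith
        have "v m \<le> v (Suc m)" using exec_mono[OF exec] by simp
        then have "busy m" using busyI m sv vt by auto
        then have "v m < fin m" "fin m \<le> v (Suc m)" using exec_fin[OF exec, of m] by auto
        then show "m \<in> I" using \<open>busy m\<close> m sv vt unfolding I_def by auto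
      qed
    qed
    finally have cI: "q * w i \<le> card I" .
    have "w i * card J \<le> w i * (Suc q * w j)" using cJ by simp
    also have "\<dots> = w i * w j + w j * (q * w i)" by (simp add: algebra_simps)
    also have "\<dots> \<le> w i * w j + w j * card I" using cI by simp
    finally show ?thesis unfolding J_def I_def .
  qed
qed


lemma dep_diff:
  assumes exec: "iwrr_exec n w arr v busy fin" and fin: "finite {p. arr k p < t}" and st: "s \<le> t"
  shows "cum_dep n w busy fin len k t - cum_dep n w busy fin len k s =
    (\<Sum>m\<in>{m. busy m \<and> slot_flow n w m = k \<and> s \<le> fin m \<and> fin m < t}. len k (served n w busy k m))"
proof -
  have f: "finite {m. busy m \<and> slot_flow n w m = k \<and> fin m < t}" using finite_dep[OF exec fin] .
  have sub: "{m. busy m \<and> slot_flow n w m = k \<and> fin m < s} \<subseteq> {m. busy m \<and> slot_flow n w m = k \<and> fin m < t}"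
    using st by auto
  have eq: "{m. busy m \<and> slot_flow n w m = k \<and> s \<le> fin m \<and> fin m < t} =
     {m. busy m \<and> slot_flow n w m = k \<and> fin m < t} - {m. busy m \<and> slot_flow n w m = k \<and> fin m < s}"
    by auto
  show ?thesis unfolding cum_dep_def eq by (rule sum_diff[OF f sub, symmetric])
qed

theorem mainTheorem4:
  fixes n :: nat and w :: "nat \<Rightarrow> nat"
    and lmin lmax :: "nat \<Rightarrow> real"
    and arr len :: "nat \<Rightarrow> nat \<Rightarrow> real"
    and v fin :: "nat \<Rightarrow> real" and busy :: "nat \<Rightarrow> bool"
    and i j :: nat and s t :: real
  assumes w_pos: "\<forall>k<n. 0 < w k"
    and l_bounds: "\<forall>k<n. 0 < lmin k \<and> lmin k \<le> lmax k"
    and len_bounds: "\<forall>k<n. \<forall>p. lmin k \<le> len k p \<and> len k p \<le> lmax k"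
    and arr_nonneg: "\<forall>k<n. \<forall>p. 0 \<le> arr k p"
    and fifo: "\<forall>k<n. mono (arr k)"
    and arr_finite: "\<forall>k<n. \<forall>\<tau>. finite {p. arr k p < \<tau>}"
    and exec: "iwrr_exec n w arr v busy fin"
    and ij: "i < n" "j < n" "j \<noteq> i"
    and st: "s \<le> t"
    and backlogged: "\<forall>\<tau>. s < \<tau> \<and> \<tau> \<le> t \<longrightarrow>
                       cum_dep n w busy fin len i \<tau> < cum_arr arr len i \<tau>"
  shows "(cum_dep n w busy fin len i t - cum_dep n w busy fin len i s) / (real (w i) * lmin i)
         \<ge> pos_part ((cum_dep n w busy fin len j t - cum_dep n w busy fin len j s)
                       - real (w j) * lmax j) / (real (w j) * lmax j)"
proof -
  define J where "J = {m. busy m \<and> slot_flow n w m = j \<and> s \<le> fin m \<and> fin m < t}"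
  define I where "I = {m. busy m \<and> slot_flow n w m = i \<and> s \<le> fin m \<and> fin m < t}"
  have lenpos: "\<forall>p. 0 \<le> len i p" using len_bounds l_bounds ij by (meson less_le_trans less_imp_le)
  have busyI: "\<forall>m. slot_flow n w m = i \<and> s \<le> v m \<and> v m < t \<longrightarrow> busy m"
  proof (intro allI impI)
    fix m assume m: "slot_flow n w m = i \<and> s \<le> v m \<and> v m < t"
    show "busy m"
      by (rule idle_contra[where len=len and i=i and s=s and t=t, OF exec lenpos])
         (use fifo arr_finite ij backlogged m in auto)
  qed
  have finJ: "finite J"
  proof -
    have "finite {m. busy m \<and> slot_flow n w m = j \<and> fin m < t}" using finite_dep[OF exec, of j t] arr_finite ij by blast
    then show ?thesis unfolding J_def by (rule finite_subset[rotated]) auto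
  qed
  have finI: "finite I"
  proof -
    have "finite {m. busy m \<and> slot_flow n w m = i \<and> fin m < t}" using finite_dep[OF exec, of i t] arr_finite ij by blast
    then show ?thesis unfolding I_def by (rule finite_subset[rotated]) auto
  qed
  have key: "w i * card J \<le> w i * w j + w j * card I"
    using key_count[OF exec w_pos ij busyI] finJ finI unfolding J_def I_def by blast
  define DJ where "DJ = cum_dep n w busy fin len j t - cum_dep n w busy fin len j s"
  define DI where "DI = cum_dep n w busy fin len i t - cum_dep n w busy fin len i s"
  have DJs: "DJ = (\<Sum>m\<in>J. len j (served n w busy j m))"
    unfolding DJ_def J_def using dep_diff[OF exec _ st] arr_finite ij by blast
  have DIs: "DI = (\<Sum>m\<in>I. len i (served n w busy i m))"
    unfolding DI_def I_def using dep_diff[OF exec _ st] arr_finite ij by blast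
  have DJle: "DJ \<le> real (card J) * lmax j"
    unfolding DJs using len_bounds ij by (intro sum_bounded_above) auto
  have DIge: "real (card I) * lmin i \<le> DI"
    unfolding DIs using len_bounds ij by (intro sum_bounded_below) auto
  define cI where "cI = real (card I)"
  define cJ where "cJ = real (card J)"
  define wi where "wi = real (w i)"
  define wj where "wj = real (w j)"
  have wi: "0 < wi" using w_pos ij unfolding wi_def by simp
  have wj: "0 < wj" using w_pos ij unfolding wj_def by simp
  have lmi: "0 < lmin i" using l_bounds ij by simp
  have lmj: "0 < lmax j" using l_bounds ij by (meson less_le_trans)
  have keyr: "wi * cJ \<le> wi * wj + wj * cI"
    unfolding wi_def wj_def cI_def cJ_def using key by (metis of_nat_add of_nat_le_iff of_nat_mult)
  have cIn: "0 \<le> cI" unfolding cI_def by simp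
  have e1: "cJ - wj \<le> wj * cI / wi"
    using keyr wi by (simp add: field_simps)
  have "pos_part (DJ - wj * lmax j) \<le> (wj * cI / wi) * lmax j"
  proof -
    have "DJ - wj * lmax j \<le> (cJ - wj) * lmax j" using DJle unfolding cJ_def by (simp add: algebra_simps)
    also have "\<dots> \<le> (wj * cI / wi) * lmax j" using e1 lmj by (intro mult_right_mono) auto
    finally have 1: "DJ - wj * lmax j \<le> (wj * cI / wi) * lmax j" .
    have 2: "0 \<le> (wj * cI / wi) * lmax j" using wi wj cIn lmj by simp
    show ?thesis unfolding pos_part_def using 1 2 by simp
  qed
  then have "pos_part (DJ - wj * lmax j) / (wj * lmax j) \<le> ((wj * cI / wi) * lmax j) / (wj * lmax j)"
    using wj lmj by (intro divide_right_mono) auto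
  also have "\<dots> = (cI * lmin i) / (wi * lmin i)" using wj lmj lmi wi by (simp add: field_simps)
  also have "\<dots> \<le> DI / (wi * lmin i)"
    using DIge wi lmi unfolding cI_def by (intro divide_right_mono) auto
  finally show ?thesis unfolding DI_def DJ_def wi_def wj_def by simp
qed

end
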